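(* Let $\mathcal{B}=\{1,\dots,|\mathcal{B}|\}$ be a finite set of bins and let $N$ data points $j=1,\dots,N$ each belong to exactly one bin $B(j)\in\mathcal{B}$. For $i\in\mathcal{B}$ let $\mathcal{U}_i=\{j: B(j)=i\}$ and assume $\mathcal{U}_i\neq\emptyset$ for every $i$. Let $P_i\in(0,1]$ for $i\in\mathcal{B}$, and let $O_1,\dots,O_N$ be independent Bernoulli random variables with $\mathbb{P}(O_j=1)=P_{B(j)}$. Set $\mathcal{S}_i=\{j\in\mathcal{U}_i: O_j=1\}$. Let $\mathcal{H}=\{\hat Y_1,\dots,\hat Y_{|\mathcal{H}|}\}$ be a finite set of predictions, and for each $\hat Y\in\mathcal{H}$ and each $j$ let $\delta_j(Y,\hat Y)\in[0,\Delta]$ be a fixed (non-random) loss value, where $\Delta>0$. Let $\tilde P_i>0$, $i\in\mathcal{B}$, be given numbers (estimated propensities). Define the true risk $$R(\hat Y)=\frac{1}{|\mathcal{B}|}\sum_{i=1}^{|\mathcal{B}|}\frac{1}{|\mathcal{U}_i|}\sum_{j\in\mathcal{U}_i}\delta_j(Y,\hat Y)$$ and the VIR estimator $$\hat R_{\mathrm{VIR}}(\hat Y\mid\tilde P)=\frac{1}{|\mathcal{B}|}\sum_{i=1}^{|\mathcal{B}|}\frac{1}{|\mathcal{U}_i|}\sum_{j\in\mathcal{S}_i}\frac{\delta_j(Y,\hat Y)}{\tilde P_i},$$ and let $\hat Y^{\mathrm{ERM}}\in\operatorname{argmin}_{\hat Y\in\mathcal{H}}\hat R_{\mathrm{VIR}}(\hat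 Y\mid\tilde P)$ (a random element of $\mathcal{H}$ depending on $O$). Then for every $\eta\in(0,1)$, with probability at least $1-\eta$ over $O$, $$R(\hat Y^{\mathrm{ERM}})\le \hat R_{\mathrm{VIR}}(\hat Y^{\mathrm{ERM}}\mid\tilde P)+\frac{\Delta}{|\mathcal{B}|}\sum_{i=1}^{|\mathcal{B}|}\Big|1-\frac{P_i}{\tilde P_i}\Big|+\frac{\Delta}{|\mathcal{B}|}\sqrt{\frac{\log(2|\mathcal{H}|/\eta)}{2}}\sqrt{\sum_{i=1}^{|\mathcal{B}|}\frac{1}{\tilde P_i^{2}}}.$$
   Context: This is the generalization bound for imbalanced regression: the label space is partitioned into equal-interval bins, an imbalanced dataset is modeled as the observed subset (indicators $O_j$) of a full dataset, with observation probability ("propensity") $P_i$ depending only on the bin. $\tilde P_i$ is the smoothed label distribution used in the training objective. *)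

theory Defs
  imports "HOL-Probability.Probability"
begin

text \<open>Data points are 1..N, bins are 1..K; Bin j is the bin of data point j.\<close>

definition binU :: "nat \<Rightarrow> (nat \<Rightarrow> nat) \<Rightarrow> nat \<Rightarrow> nat set" where
  "binU N Bin i = {j \<in> {1..N}. Bin j = i}"

definition binS :: "nat \<Rightarrow> (nat \<Rightarrow> nat) \<Rightarrow> (nat \<Rightarrow> bool) \<Rightarrow> nat \<Rightarrow> nat set" where
  "binS N Bin obs i = {j \<in> binU N Bin i. obs j}"

definition true_risk :: "nat \<Rightarrow> nat \<Rightarrow> (nat \<Rightarrow> nat) \<Rightarrow> (nat \<Rightarrow> real) \<Rightarrow> real" where
  "true_risk K N Bin d =
     (1 / real K) * (\<Sum>i = 1..K. (1 / real (card (binU N Bin i))) * (\<Sum>j\<in>binU N Bin i. d j))"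

definition vir_risk :: "nat \<Rightarrow> nat \<Rightarrow> (nat \<Rightarrow> nat) \<Rightarrow> (nat \<Rightarrow> real) \<Rightarrow> (nat \<Rightarrow> bool) \<Rightarrow> (nat \<Rightarrow> real) \<Rightarrow> real" where
  "vir_risk K N Bin Pt obs d =
     (1 / real K) * (\<Sum>i = 1..K. (1 / real (card (binU N Bin i))) * (\<Sum>j\<in>binS N Bin obs i. d j / Pt i))"

definition obs_pmf :: "nat \<Rightarrow> (nat \<Rightarrow> nat) \<Rightarrow> (nat \<Rightarrow> real) \<Rightarrow> (nat \<Rightarrow> bool) pmf" where
  "obs_pmf N Bin P = Pi_pmf {1..N} False (\<lambda>j. bernoulli_pmf (P (Bin j)))"

end

theory Submission imports Defs begin

lemma group_bins:
  fixes g :: "nat \<Rightarrow> nat \<Rightarrow> real"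
  assumes bins: "\<forall>j\<in>{1..N}. Bin j \<in> {1..K}"
  shows "(\<Sum>j\<in>{1..N}. g (Bin j) j) = (\<Sum>i=1..K. \<Sum>j\<in>binU N Bin i. g i j)"
proof -
  have "(\<Sum>j\<in>{1..N}. g (Bin j) j) = (\<Sum>i\<in>{1..K}. \<Sum>j\<in>{x. x \<in> {1..N} \<and> Bin x = i}. g (Bin j) j)"
    by (rule sum.group[symmetric]) (use bins in auto)
  also have "\<dots> = (\<Sum>i=1..K. \<Sum>j\<in>binU N Bin i. g i j)"
    by (intro sum.cong refl) (auto simp: binU_def)
  finally show ?thesis .
qed

lemma vir_eq:
  assumes bins: "\<forall>j\<in>{1..N}. Bin j \<in> {1..K}"
  shows "vir_risk K N Bin Pt obs f =
    (\<Sum>j\<in>{1..N}. if obs j then f j / (real K * real (card (binU N Bin (Bin j))) * Pt (Bin j)) else 0)"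
proof -
  have "(\<Sum>j\<in>{1..N}. if obs j then f j / (real K * real (card (binU N Bin (Bin j))) * Pt (Bin j)) else 0)
     = (\<Sum>i=1..K. \<Sum>j\<in>binU N Bin i. if obs j then f j / (real K * real (card (binU N Bin i)) * Pt i) else 0)"
    using group_bins[OF bins, of "\<lambda>i j. if obs j then f j / (real K * real (card (binU N Bin i)) * Pt i) else 0"]
    by simp
  also have "\<dots> = (\<Sum>i=1..K. (1 / real K) * ((1 / real (card (binU N Bin i))) * (\<Sum>j\<in>binS N Bin obs i. f j / Pt i)))"
  proof (intro sum.cong refl)
    fix i
    have fin: "finite (binU N Bin i)" by (simp add: binU_def)
    show "(\<Sum>j\<in>binU N Bin i. if obs j then f j / (real K * real (card (binU N Bin i)) * Pt i) else 0)
       = (1 / real K) * ((1 / real (card (binU N Bin i))) * (\<Sum>j\<in>binS N Bin obs i. f j / Pt i))"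
      unfolding binS_def sum.inter_filter[OF fin] sum_distrib_left
      by (intro sum.cong refl) auto
  qed
  finally show ?thesis unfolding vir_risk_def by (simp add: sum_distrib_left)
qed

lemma true_eq:
  assumes bins: "\<forall>j\<in>{1..N}. Bin j \<in> {1..K}"
  shows "true_risk K N Bin f =
    (\<Sum>j\<in>{1..N}. f j / (real K * real (card (binU N Bin (Bin j)))))"
proof -
  have "(\<Sum>j\<in>{1..N}. f j / (real K * real (card (binU N Bin (Bin j)))))
     = (\<Sum>i=1..K. \<Sum>j\<in>binU N Bin i. f j / (real K * real (card (binU N Bin i))))"
    using group_bins[OF bins, of "\<lambda>i j. f j / (real K * real (card (binU N Bin i)))"]
    by simp
  then show ?thesis unfolding true_risk_def by (simp add: sum_distrib_left)
qed

lemma expect_obs: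
  assumes "j \<in> {1..N}" "0 \<le> P (Bin j)" "P (Bin j) \<le> 1"
  shows "measure_pmf.expectation (obs_pmf N Bin P) (\<lambda>obs. if obs j then (v::real) else 0) = v * P (Bin j)"
proof -
  have "measure_pmf.expectation (obs_pmf N Bin P) (\<lambda>obs. if obs j then v else 0)
      = measure_pmf.expectation (map_pmf (\<lambda>f. f j) (obs_pmf N Bin P)) (\<lambda>b. if b then v else 0)"
    by simp
  also have "map_pmf (\<lambda>f. f j) (obs_pmf N Bin P) = bernoulli_pmf (P (Bin j))"
    unfolding obs_pmf_def using assms by (subst Pi_pmf_component) auto
  finally show ?thesis using assms by simp
qed

lemma indep_obs:
  "prob_space.indep_vars (measure_pmf (obs_pmf N Bin P)) (\<lambda>_. borel)
     (\<lambda>j obs. if obs j then (v j::real) else 0) {1..N}"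
proof -
  have "prob_space.indep_vars (measure_pmf (obs_pmf N Bin P)) (\<lambda>_. count_space UNIV) (\<lambda>x f. f x) {1..N}"
    unfolding obs_pmf_def by (rule indep_vars_Pi_pmf) simp
  then have "prob_space.indep_vars (measure_pmf (obs_pmf N Bin P)) (\<lambda>_. borel) (\<lambda>j obs. (\<lambda>b. if b then v j else 0) (obs j)) {1..N}"
    by (rule prob_space.indep_vars_compose2[OF measure_pmf.prob_space_axioms]) simp
  then show ?thesis by simp
qed

lemma hoeff_obs:
  fixes w c :: "nat \<Rightarrow> real"
  assumes bnd: "\<forall>j\<in>{1..N}. 0 \<le> w j \<and> w j \<le> c j"
    and Pr: "\<forall>j\<in>{1..N}. 0 \<le> P (Bin j) \<and> P (Bin j) \<le> 1"
    and pos: "(\<Sum>j\<in>{1..N}. (c j - 0)\<^sup>2) > 0" and eps: "eps \<ge> 0"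
  shows "measure_pmf.prob (obs_pmf N Bin P)
     {obs. (\<Sum>j\<in>{1..N}. if obs j then w j else 0) \<le> (\<Sum>j\<in>{1..N}. w j * P (Bin j)) - eps}
     \<le> exp (-2 * eps\<^sup>2 / (\<Sum>j\<in>{1..N}. (c j - 0)\<^sup>2))"
proof -
  interpret H: Hoeffding_ineq "measure_pmf (obs_pmf N Bin P)" "{1..N}"
    "\<lambda>j obs. if obs j then w j else 0" "\<lambda>_. 0" c
    "\<Sum>j\<in>{1..N}. measure_pmf.expectation (obs_pmf N Bin P) (\<lambda>obs. if obs j then w j else 0)"
  proof unfold_locales
    show "finite {1..N}" by simp
    show "prob_space.indep_vars (measure_pmf (obs_pmf N Bin P)) (\<lambda>_. borel)
     (\<lambda>j obs. if obs j then w j else 0) {1..N}" by (rule indep_obs)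
    fix i assume "i \<in> {1..N}"
    then show "AE x in measure_pmf (obs_pmf N Bin P). (if x i then w i else 0) \<in> {0..c i}"
    proof (intro AE_I2)
      fix x show "(if x i then w i else 0) \<in> {0..c i}"
        using bnd \<open>i \<in> {1..N}\<close> by fastforce
    qed
  qed simp
  have E: "(\<Sum>j\<in>{1..N}. measure_pmf.expectation (obs_pmf N Bin P) (\<lambda>obs. if obs j then w j else 0))
      = (\<Sum>j\<in>{1..N}. w j * P (Bin j))"
    by (intro sum.cong refl expect_obs) (use Pr in auto)
  show ?thesis using H.Hoeffding_ineq_le[OF eps pos] unfolding E by simp
qed

theorem mainTheorem1:
  fixes K N :: nat and Bin :: "nat \<Rightarrow> nat" and P Pt :: "nat \<Rightarrow> real"
    and H :: "'h set" and delta :: "'h \<Rightarrow> nat \<Rightarrow> real" and Delta eta :: real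
    and erm :: "(nat \<Rightarrow> bool) \<Rightarrow> 'h"
  assumes bins: "\<forall>j\<in>{1..N}. Bin j \<in> {1..K}"
    and nonempty_bins: "\<forall>i\<in>{1..K}. binU N Bin i \<noteq> {}"
    and P_range: "\<forall>i\<in>{1..K}. 0 < P i \<and> P i \<le> 1"
    and Pt_pos: "\<forall>i\<in>{1..K}. 0 < Pt i"
    and H_fin: "finite H" and H_ne: "H \<noteq> {}"
    and Delta_pos: "0 < Delta"
    and delta_range: "\<forall>h\<in>H. \<forall>j\<in>{1..N}. 0 \<le> delta h j \<and> delta h j \<le> Delta"
    and erm_in: "\<forall>obs. erm obs \<in> H"
    and erm_min: "\<forall>obs. \<forall>h\<in>H. vir_risk K N Bin Pt obs (delta (erm obs)) \<le> vir_risk K N Bin Pt obs (delta h)"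
    and eta: "0 < eta" "eta < 1"
  shows "measure_pmf.prob (obs_pmf N Bin P)
           {obs. true_risk K N Bin (delta (erm obs))
               \<le> vir_risk K N Bin Pt obs (delta (erm obs))
                 + Delta / real K * (\<Sum>i = 1..K. \<bar>1 - P i / Pt i\<bar>)
                 + Delta / real K * sqrt (ln (2 * real (card H) / eta) / 2)
                     * sqrt (\<Sum>i = 1..K. 1 / (Pt i)\<^sup>2)}
         \<ge> 1 - eta"
proof (cases "K = 0")
  case True
  then show ?thesis using eta by (simp add: true_risk_def vir_risk_def)
next
  case False
  then have Kpos: "real K > 0" by simp
  define Q where "Q = obs_pmf N Bin P"
  define u where "u i = real (card (binU N Bin i))" for i
  define den where "den j = real K * real (card (binU N Bin (Bin j))) * Pt (Bin j)" for j
  define c where "c j = Delta / den j" for j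
  define w where "w h j = delta h j / den j" for h j
  define mu where "mu h = (\<Sum>j\<in>{1..N}. w h j * P (Bin j))" for h
  define bias where "bias = Delta / real K * (\<Sum>i = 1..K. \<bar>1 - P i / Pt i\<bar>)"
  define L where "L = ln (2 * real (card H) / eta)"
  define S where "S = (\<Sum>i = 1..K. 1 / (Pt i)\<^sup>2)"
  define eps where "eps = Delta / real K * sqrt (L / 2) * sqrt S"
  have u_ge1: "u i \<ge> 1" if "i \<in> {1..K}" for i
  proof -
    have "finite (binU N Bin i)" by (simp add: binU_def)
    then have "card (binU N Bin i) \<noteq> 0" using nonempty_bins that by auto
    then show ?thesis by (simp add: u_def)
  qed
  have den_pos: "den j > 0" if "j \<in> {1..N}" for j
    using u_ge1[of "Bin j"] bins that Pt_pos Kpos unfolding den_def u_def by auto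
  have cardH: "real (card H) \<ge> 1" using H_fin H_ne by (simp add: Suc_leI card_gt_0_iff)
  have L_pos: "L > 0"
  proof -
    have "2 * real (card H) / eta > 1" using cardH eta by (simp add: field_simps)
    then show ?thesis unfolding L_def by simp
  qed
  have S_pos: "S > 0" unfolding S_def
    using False Pt_pos by (intro sum_pos) (auto, metis atLeastAtMost_iff less_irrefl)
  have C_eq: "(\<Sum>j\<in>{1..N}. (c j - 0)\<^sup>2) = (\<Sum>i=1..K. u i * (Delta / (real K * u i * Pt i))\<^sup>2)"
  proof -
    have "(\<Sum>j\<in>{1..N}. (c j - 0)\<^sup>2) = (\<Sum>i=1..K. \<Sum>j\<in>binU N Bin i. (Delta / (real K * u i * Pt i))\<^sup>2)"
      using group_bins[OF bins, of "\<lambda>i j. (Delta / (real K * u i * Pt i))\<^sup>2"]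
      by (simp add: c_def den_def u_def)
    then show ?thesis by (simp add: u_def)
  qed
  have C_pos: "(\<Sum>j\<in>{1..N}. (c j - 0)\<^sup>2) > 0"
    unfolding C_eq
  proof (intro sum_pos)
    show "finite {1..K}" by simp
    show "{1..K} \<noteq> {}" using False by simp
    fix i assume i: "i \<in> {1..K}"
    have "u i > 0" using u_ge1[OF i] by simp
    moreover have "Pt i > 0" using Pt_pos i by blast
    ultimately show "0 < u i * (Delta / (real K * u i * Pt i))\<^sup>2"
      using Delta_pos Kpos by simp
  qed
  have C_le: "(\<Sum>j\<in>{1..N}. (c j - 0)\<^sup>2) \<le> (Delta / real K)\<^sup>2 * S"
    unfolding C_eq S_def sum_distrib_left
  proof (intro sum_mono)
    fix i assume i: "i \<in> {1..K}"
    have "u i * (Delta / (real K * u i * Pt i))\<^sup>2 = (Delta / real K)\<^sup>2 * (1 / (Pt i)\<^sup>2) / u i"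
      using u_ge1[OF i] by (simp add: power2_eq_square field_simps)
    also have "\<dots> \<le> (Delta / real K)\<^sup>2 * (1 / (Pt i)\<^sup>2)"
      using divide_left_mono[of 1 "u i" "(Delta / real K)\<^sup>2 * (1 / (Pt i)\<^sup>2)"] u_ge1[OF i] by simp
    finally show "u i * (Delta / (real K * u i * Pt i))\<^sup>2 \<le> (Delta / real K)\<^sup>2 * (1 / (Pt i)\<^sup>2)" .
  qed
  have eps_sq: "eps\<^sup>2 = (Delta / real K)\<^sup>2 * S * L / 2"
  proof -
    have "eps\<^sup>2 = (Delta / real K)\<^sup>2 * (sqrt (L / 2))\<^sup>2 * (sqrt S)\<^sup>2"
      unfolding eps_def by (simp only: power_mult_distrib)
    also have "\<dots> = (Delta / real K)\<^sup>2 * (L / 2) * S" using L_pos S_pos by simp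
    finally show ?thesis by simp
  qed
  have eps_nn: "eps \<ge> 0" using L_pos S_pos Delta_pos Kpos by (simp add: eps_def)
  have exp_bnd: "exp (-2 * eps\<^sup>2 / (\<Sum>j\<in>{1..N}. (c j - 0)\<^sup>2)) \<le> eta / (2 * real (card H))"
  proof -
    define C where "C = (\<Sum>j\<in>{1..N}. (c j - 0)\<^sup>2)"
    have "-2 * eps\<^sup>2 / C \<le> - L"
    proof -
      have DS: "(Delta / real K)\<^sup>2 * S \<ge> C" using C_le by (simp add: C_def)
      define D where "D = (Delta / real K)\<^sup>2 * S"
      have e2: "eps\<^sup>2 = D * L / 2" unfolding D_def eps_sq by simp
      have "L * C \<le> D * L" using DS L_pos unfolding D_def by (simp add: mult.commute)
      then have "L \<le> D * L / C" using C_pos C_def by (simp add: le_divide_eq)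
      moreover have "-2 * eps\<^sup>2 / C = - (D * L / C)" unfolding e2 by simp
      ultimately show ?thesis by linarith
    qed
    then have "exp (-2 * eps\<^sup>2 / C) \<le> exp (- L)" by simp
    also have "exp (- L) = eta / (2 * real (card H))"
      using cardH eta by (simp add: L_def exp_minus)
    finally show ?thesis by (simp add: C_def)
  qed
  define A where "A h = {obs. (\<Sum>j\<in>{1..N}. if obs j then w h j else 0) \<le> mu h - eps}" for h
  have probA: "measure_pmf.prob Q (A h) \<le> eta / (2 * real (card H))" if h: "h \<in> H" for h
  proof -
    have "measure_pmf.prob Q (A h) \<le> exp (-2 * eps\<^sup>2 / (\<Sum>j\<in>{1..N}. (c j - 0)\<^sup>2))"
      unfolding Q_def A_def mu_def
    proof (rule hoeff_obs[OF _ _ C_pos eps_nn])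
      show "\<forall>j\<in>{1..N}. 0 \<le> w h j \<and> w h j \<le> c j"
      proof
        fix j assume j: "j \<in> {1..N}"
        have "den j > 0" using den_pos j by blast
        moreover have "0 \<le> delta h j" "delta h j \<le> Delta" using delta_range h j by auto
        ultimately show "0 \<le> w h j \<and> w h j \<le> c j" unfolding w_def c_def
          by (simp add: divide_right_mono)
      qed
      show "\<forall>j\<in>{1..N}. 0 \<le> P (Bin j) \<and> P (Bin j) \<le> 1"
        using P_range bins by fastforce
    qed
    then show ?thesis using exp_bnd by linarith
  qed
  have vir: "vir_risk K N Bin Pt obs (delta h) = (\<Sum>j\<in>{1..N}. if obs j then w h j else 0)" for obs h
    unfolding vir_eq[OF bins] w_def den_def ..
  have tr: "true_risk K N Bin (delta h) \<le> mu h + bias" if h: "h \<in> H" for h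
  proof -
    have "true_risk K N Bin (delta h) - mu h
        = (\<Sum>j\<in>{1..N}. delta h j * (1 - P (Bin j) / Pt (Bin j)) / (real K * u (Bin j)))"
      unfolding true_eq[OF bins] mu_def sum_subtractf[symmetric]
    proof (intro sum.cong refl)
      fix j assume j: "j \<in> {1..N}"
      have "Pt (Bin j) > 0" using Pt_pos bins j by auto
      moreover have "u (Bin j) > 0" using u_ge1 bins j by fastforce
      ultimately show "delta h j / (real K * real (card (binU N Bin (Bin j)))) - w h j * P (Bin j)
          = delta h j * (1 - P (Bin j) / Pt (Bin j)) / (real K * u (Bin j))"
        using Kpos unfolding w_def den_def u_def[symmetric] by (simp add: field_simps)
    qed
    also have "\<dots> \<le> (\<Sum>j\<in>{1..N}. Delta * \<bar>1 - P (Bin j) / Pt (Bin j)\<bar> / (real K * u (Bin j)))"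
    proof (intro sum_mono divide_right_mono)
      fix j assume j: "j \<in> {1..N}"
      have "delta h j * (1 - P (Bin j) / Pt (Bin j)) \<le> delta h j * \<bar>1 - P (Bin j) / Pt (Bin j)\<bar>"
        using delta_range h j by (intro mult_left_mono) auto
      also have "\<dots> \<le> Delta * \<bar>1 - P (Bin j) / Pt (Bin j)\<bar>"
        using delta_range h j by (intro mult_right_mono) auto
      finally show "delta h j * (1 - P (Bin j) / Pt (Bin j)) \<le> Delta * \<bar>1 - P (Bin j) / Pt (Bin j)\<bar>" .
      show "0 \<le> real K * u (Bin j)" using u_ge1 bins j Kpos by fastforce
    qed
    also have "\<dots> = (\<Sum>i=1..K. \<Sum>j\<in>binU N Bin i. Delta * \<bar>1 - P i / Pt i\<bar> / (real K * u i))"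
      by (rule group_bins[OF bins])
    also have "\<dots> = (\<Sum>i=1..K. Delta / real K * \<bar>1 - P i / Pt i\<bar>)"
    proof (intro sum.cong refl)
      fix i assume i: "i \<in> {1..K}"
      have "(\<Sum>j\<in>binU N Bin i. Delta * \<bar>1 - P i / Pt i\<bar> / (real K * u i))
          = u i * (Delta * \<bar>1 - P i / Pt i\<bar> / (real K * u i))" by (simp add: u_def)
      also have "\<dots> = Delta / real K * \<bar>1 - P i / Pt i\<bar>" using u_ge1[OF i] by (simp add: field_simps)
      finally show "(\<Sum>j\<in>binU N Bin i. Delta * \<bar>1 - P i / Pt i\<bar> / (real K * u i)) = Delta / real K * \<bar>1 - P i / Pt i\<bar>" .
    qed
    also have "\<dots> = bias" by (simp add: bias_def sum_distrib_left)
    finally show ?thesis by simp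
  qed
  define G where "G = {obs. true_risk K N Bin (delta (erm obs))
               \<le> vir_risk K N Bin Pt obs (delta (erm obs))
                 + Delta / real K * (\<Sum>i = 1..K. \<bar>1 - P i / Pt i\<bar>)
                 + Delta / real K * sqrt (ln (2 * real (card H) / eta) / 2)
                     * sqrt (\<Sum>i = 1..K. 1 / (Pt i)\<^sup>2)}"
  have sub: "UNIV - (\<Union>h\<in>H. A h) \<subseteq> G"
  proof
    fix obs assume "obs \<in> UNIV - (\<Union>h\<in>H. A h)"
    then have nA: "obs \<notin> A (erm obs)" using erm_in by auto
    have "true_risk K N Bin (delta (erm obs)) \<le> mu (erm obs) + bias" using tr erm_in by auto
    moreover have "vir_risk K N Bin Pt obs (delta (erm obs)) > mu (erm obs) - eps"
      using nA unfolding A_def vir by simp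
    ultimately show "obs \<in> G" unfolding G_def bias_def eps_def L_def S_def by simp
  qed
  have "measure_pmf.prob Q (\<Union>h\<in>H. A h) \<le> (\<Sum>h\<in>H. measure_pmf.prob Q (A h))"
    by (rule measure_UNION_le) (auto simp: H_fin)
  also have "\<dots> \<le> (\<Sum>h\<in>H. eta / (2 * real (card H)))" by (intro sum_mono probA)
  also have "\<dots> = eta / 2" using cardH by simp
  finally have U: "measure_pmf.prob Q (\<Union>h\<in>H. A h) \<le> eta / 2" .
  have "measure_pmf.prob Q (UNIV - (\<Union>h\<in>H. A h)) = 1 - measure_pmf.prob Q (\<Union>h\<in>H. A h)"
    using measure_pmf.prob_compl[of "\<Union>h\<in>H. A h" Q] by simp
  moreover have "measure_pmf.prob Q (UNIV - (\<Union>h\<in>H. A h)) \<le> measure_pmf.prob Q G"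
    using sub by (intro measure_pmf.finite_measure_mono) auto
  ultimately have "measure_pmf.prob Q G \<ge> 1 - eta" using U eta by linarith
  then show ?thesis unfolding G_def Q_def .
qed

end
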